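(* For every $\lambda\in(0,\infty)$ and $\xi\in\{0,1\}^E$, the series below converges absolutely and \[ \frac{\lambda}{N+\lambda}\sum_{n=0}^\infty\Big(\frac N{N+\lambda}\Big)^n\frac1NS_\xi\big(L_0^n(J)\big)=p_1(\xi)^2+\frac1NS_\xi\left(\frac{2(I-Q)(\lambda+2-2Q)^{-1}}{\lambda\,\mathrm{tr}\big((\lambda+2-2Q)^{-1}\big)}\right). \]
   Context: $E$ is a finite set with $N=\#E>8$ elements, listed in a fixed order; $\mathsf M_E$ is the space of complex $N\times N$ matrices indexed by $E\times E$. $Q$ is an irreducible stochastic matrix on $E$ with $Q(x,y)=Q(y,x)$ for all $x,y$ and $\mathrm{tr}(Q)=0$. $I$ is the identity, $J$ the matrix with all entries $1/N$, and $(\lambda+2-2Q)^{-1}$ the inverse of $(\lambda+2)I-2Q$. For $\xi\in\{0,1\}^E$ regarded as a vector, $S_\xi(C)=\langle\xi|C|\xi\rangle=\sum_{x,y}\xi(x)C(x,y)\xi(y)$, and $p_1(\xi)=\frac1N\sum_{x\in E}\xi(x)$. The linear operator $L_0:\mathsf M_E\to\mathsf M_E$ is $L_0(C)=\frac{N-2}NC+\frac1N(CQ+QC)-\frac{2\,\mathrm{tr}(C)}{N^2}Q+\frac{2\,\mathrm{tr}(C)}{N^2}I$, and $L_0^n$ is its $n$-fold composition. *)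

theory Defs
  imports "HOL-Analysis.Analysis"
begin

type_synonym 'e cmat = "complex^'e^'e"

definition cmat_of :: "real^'e^'e \<Rightarrow> 'e cmat" where
  "cmat_of Q = (\<chi> i j. complex_of_real (Q$i$j))"

definition stochastic :: "real^'e^'e \<Rightarrow> bool" where
  "stochastic Q \<longleftrightarrow> (\<forall>x y. Q$x$y \<ge> 0) \<and> (\<forall>x. (\<Sum>y\<in>UNIV. Q$x$y) = 1)"

definition irreducible_mat :: "real^'e^'e \<Rightarrow> bool" where
  "irreducible_mat Q \<longleftrightarrow> (\<forall>x y. (x, y) \<in> {(a, b). Q$a$b > 0}\<^sup>*)"

definition symmetric_mat :: "real^'e^'e \<Rightarrow> bool" where
  "symmetric_mat Q \<longleftrightarrow> (\<forall>x y. Q$x$y = Q$y$x)"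

definition Jmat :: "'e::finite cmat" where
  "Jmat = (\<chi> i j. 1 / of_nat CARD('e))"

definition S_xi :: "('e::finite \<Rightarrow> bool) \<Rightarrow> 'e cmat \<Rightarrow> complex" where
  "S_xi \<xi> C = (\<Sum>x\<in>UNIV. \<Sum>y\<in>UNIV. of_bool (\<xi> x) * C$x$y * of_bool (\<xi> y))"

definition p1 :: "('e::finite \<Rightarrow> bool) \<Rightarrow> real" where
  "p1 \<xi> = (1 / real CARD('e)) * (\<Sum>x\<in>UNIV. of_bool (\<xi> x))"

definition L0 :: "real^'e^'e \<Rightarrow> 'e::finite cmat \<Rightarrow> 'e cmat" where
  "L0 Q C = (let N = of_nat CARD('e) :: complex; Qc = cmat_of Q in
     mat ((N - 2) / N) ** C + mat (1 / N) ** (C ** Qc + Qc ** C)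
     - mat (2 * trace C / N^2) ** Qc + mat (2 * trace C / N^2))"

end

theory Submission
  imports Defs
begin


type_synonym 'e rmat = "real^'e^'e"

lemma mm_add_r: "((A::'a::semiring_1^'n^'m) + B) ** C = A ** C + B ** C"
  by (vector matrix_matrix_mult_def sum.distrib[symmetric] field_simps)
lemma mm_diff_l: "(A::'a::ring_1^'n^'m) ** (B - C) = A ** B - A ** C"
  by (vector matrix_matrix_mult_def sum_subtractf[symmetric] field_simps)
lemma mm_diff_r: "((A::'a::ring_1^'n^'m) - B) ** C = A ** C - B ** C"
  by (vector matrix_matrix_mult_def sum_subtractf[symmetric] field_simps)
lemma mm_scale_l: "(c *\<^sub>R (A::real^'n^'m)) ** B = c *\<^sub>R (A ** B)"
  by (simp add: matrix_matrix_mult_def sum_distrib_left mult_ac vec_eq_iff)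
lemma mm_scale_r: "(A::real^'n^'m) ** (c *\<^sub>R B) = c *\<^sub>R (A ** B)"
  by (simp add: matrix_matrix_mult_def sum_distrib_left mult_ac vec_eq_iff)
lemma trace_scale: "trace (c *\<^sub>R (A::real^'n^'n)) = c * trace A"
  by (simp add: trace_def sum_distrib_left)
lemma transpose_add: "transpose ((A::'a::semiring_1^'n^'m) + B) = transpose A + transpose B"
  by (simp add: transpose_def vec_eq_iff)
lemma transpose_diff: "transpose ((A::'a::ring_1^'n^'m) - B) = transpose A - transpose B"
  by (simp add: transpose_def vec_eq_iff)
lemma mat_real: "mat (c::real) = c *\<^sub>R (mat 1 :: real^'n^'n)"
  by (simp add: mat_def vec_eq_iff)
lemma mm_zero_l[simp]: "(0::real^'n^'m) ** A = 0" by simp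

definition psd :: "real^'n^'n \<Rightarrow> bool" where
  "psd Z \<longleftrightarrow> (\<forall>v. 0 \<le> v \<bullet> (Z *v v))"

lemma inner_qf: "v \<bullet> (Z *v v) = (\<Sum>i\<in>UNIV. \<Sum>j\<in>UNIV. v$i * Z$i$j * v$j)"
  by (simp add: inner_vec_def matrix_vector_mult_def sum_distrib_left mult_ac)

lemma psd_conj: "psd Z \<Longrightarrow> psd (Y ** Z ** transpose Y)"
  unfolding psd_def
proof
  fix v assume "\<forall>v. 0 \<le> v \<bullet> (Z *v v)"
  then have "0 \<le> (transpose Y *v v) \<bullet> (Z *v (transpose Y *v v))" by blast
  also have "\<dots> = v \<bullet> ((Y ** Z ** transpose Y) *v v)"
    by (metis dot_lmul_matrix matrix_vector_mul_assoc vector_transpose_matrix transpose_transpose)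
  finally show "0 \<le> v \<bullet> ((Y ** Z ** transpose Y) *v v)" .
qed



locale qset =
  fixes Q :: "real^'e::finite^'e"
  assumes stoch: "stochastic Q" and symm: "symmetric_mat Q" and tr0: "trace Q = 0"
    and card8: "CARD('e) > 8"
begin

lemma Qnn: "0 \<le> Q$x$y" using stoch by (simp add: stochastic_def)
lemma Qrow: "(\<Sum>y\<in>UNIV. Q$x$y) = 1" using stoch by (simp add: stochastic_def)
lemma Qsym: "Q$x$y = Q$y$x" using symm by (simp add: symmetric_mat_def)
lemma Qcol: "(\<Sum>x\<in>UNIV. Q$x$y) = 1" using Qrow[of y] Qsym by simp
lemma QT: "transpose Q = Q" by (simp add: transpose_def vec_eq_iff Qsym)

lemma axis_qf: "axis i (1::real) \<bullet> (Z *v axis j 1) = Z$i$j"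
  by (simp add: inner_vec_def matrix_vector_mult_def axis_def mult.commute[of "Z$_$_"] if_distrib if_distribR sum.delta cong: if_cong)

lemma key_sum:
  assumes "psd Z" and s: "s = 1 \<or> s = -1"
  shows "0 \<le> (\<Sum>x\<in>UNIV. Z$x$x) + s * (\<Sum>x\<in>UNIV. \<Sum>y\<in>UNIV. Q$x$y * Z$y$x)"
proof -
  define w where "w x y = Z$x$x + Z$y$y + s * Z$x$y + s * Z$y$x" for x y
  have w0: "0 \<le> w x y" for x y
  proof -
    define u where "u = axis x (1::real) + s *\<^sub>R axis y 1"
    have "0 \<le> u \<bullet> (Z *v u)" using assms(1) by (simp add: psd_def)
    also have "u \<bullet> (Z *v u) = Z$x$x + s * Z$x$y + s * Z$y$x + s * s * Z$y$y"
      unfolding u_def by (simp add: matrix_vector_right_distrib matrix_vector_mult_scaleR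
          inner_add_left inner_add_right axis_qf algebra_simps)
    also have "s * s = 1" using s by auto
    finally show ?thesis by (simp add: w_def algebra_simps)
  qed
  have sw: "(\<Sum>x\<in>UNIV. \<Sum>y\<in>UNIV. Q$x$y * w x y) =
      2 * ((\<Sum>x\<in>UNIV. Z$x$x) + s * (\<Sum>x\<in>UNIV. \<Sum>y\<in>UNIV. Q$x$y * Z$y$x))"
  proof -
    have a: "(\<Sum>x\<in>UNIV. \<Sum>y\<in>UNIV. Q$x$y * Z$x$x) = (\<Sum>x\<in>UNIV. Z$x$x)"
      by (simp add: sum_distrib_right[symmetric] Qrow)
    have b: "(\<Sum>x\<in>UNIV. \<Sum>y\<in>UNIV. Q$x$y * Z$y$y) = (\<Sum>x\<in>UNIV. Z$x$x)"
      by (subst sum.swap) (simp add: sum_distrib_right[symmetric] Qcol)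
    have c: "(\<Sum>x\<in>UNIV. \<Sum>y\<in>UNIV. Q$x$y * Z$x$y) = (\<Sum>x\<in>UNIV. \<Sum>y\<in>UNIV. Q$x$y * Z$y$x)"
      by (subst sum.swap) (simp add: Qsym)
    have "(\<Sum>x\<in>UNIV. \<Sum>y\<in>UNIV. Q$x$y * w x y) =
       (\<Sum>x\<in>UNIV. \<Sum>y\<in>UNIV. Q$x$y * Z$x$x) + (\<Sum>x\<in>UNIV. \<Sum>y\<in>UNIV. Q$x$y * Z$y$y)
       + s * (\<Sum>x\<in>UNIV. \<Sum>y\<in>UNIV. Q$x$y * Z$x$y) + s * (\<Sum>x\<in>UNIV. \<Sum>y\<in>UNIV. Q$x$y * Z$y$x)"
      by (simp add: w_def algebra_simps sum.distrib sum_distrib_left)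
    then show ?thesis using a b c by simp
  qed
  have "0 \<le> (\<Sum>x\<in>UNIV. \<Sum>y\<in>UNIV. Q$x$y * w x y)"
    by (intro sum_nonneg mult_nonneg_nonneg Qnn w0)
  then show ?thesis using sw by simp
qed

lemma key:
  assumes "psd Z" and "P = mat 1 + Q \<or> P = mat 1 - Q"
  shows "0 \<le> trace (P ** Z)"
proof -
  have tP: "trace (mat 1 ** Z) = (\<Sum>x\<in>UNIV. Z$x$x)" by (simp add: trace_def)
  have tQ: "trace (Q ** Z) = (\<Sum>x\<in>UNIV. \<Sum>y\<in>UNIV. Q$x$y * Z$y$x)"
    by (simp add: trace_def matrix_matrix_mult_def)
  from assms(2) show ?thesis
  proof
    assume "P = mat 1 + Q"
    then show ?thesis using key_sum[OF assms(1), of 1] tP tQ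
      by (simp add: mm_add_r trace_add)
  next
    assume "P = mat 1 - Q"
    then show ?thesis using key_sum[OF assms(1), of "-1"] tP tQ
      by (simp add: mm_diff_r trace_sub)
  qed
qed

end


context qset begin

definition "Ipl = (mat 1 + Q :: real^'e^'e)"
definition "Imn = (mat 1 - Q :: real^'e^'e)"

lemma Ipl_comm: "Ipl ** Q = Q ** Ipl" by (simp add: Ipl_def mm_add_r matrix_add_ldistrib)
lemma Imn_comm: "Imn ** Q = Q ** Imn" by (simp add: Imn_def mm_diff_r mm_diff_l)
lemma Ipl_T: "transpose Ipl = Ipl" by (simp add: Ipl_def transpose_add QT)
lemma Imn_T: "transpose Imn = Imn" by (simp add: Imn_def transpose_diff QT)

lemma comm_T: "Y ** Q = Q ** Y \<Longrightarrow> transpose Y ** Q = Q ** transpose Y"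
  by (metis QT matrix_transpose_mul)

lemma comm_mul: "A ** Q = Q ** A \<Longrightarrow> B ** Q = Q ** B \<Longrightarrow> (A ** B) ** Q = Q ** (A ** B)"
  by (metis matrix_mul_assoc)
lemma comm_add: "A ** Q = Q ** A \<Longrightarrow> B ** Q = Q ** B \<Longrightarrow> (A + B) ** Q = Q ** (A + B)"
  by (simp add: mm_add_r matrix_add_ldistrib)
lemma comm_diff: "A ** Q = Q ** A \<Longrightarrow> B ** Q = Q ** B \<Longrightarrow> (A - B) ** Q = Q ** (A - B)"
  by (simp add: mm_diff_r mm_diff_l)
lemma comm_scale: "A ** Q = Q ** A \<Longrightarrow> (c *\<^sub>R A) ** Q = Q ** (c *\<^sub>R A)"
  by (simp add: mm_scale_l mm_scale_r)
lemma comm_I: "mat 1 ** Q = Q ** mat 1" by simp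
lemma comm_Q: "Q ** Q = Q ** Q" by simp

lemma Ipl_comm_gen: "Y ** Q = Q ** Y \<Longrightarrow> Ipl ** Y = Y ** Ipl"
  by (simp add: Ipl_def mm_add_r matrix_add_ldistrib)
lemma Imn_comm_gen: "Y ** Q = Q ** Y \<Longrightarrow> Imn ** Y = Y ** Imn"
  by (simp add: Imn_def mm_diff_r mm_diff_l)

inductive_set K :: "(real^'e^'e) set" where
  K0: "0 \<in> K"
| Kadd: "X \<in> K \<Longrightarrow> Y \<in> K \<Longrightarrow> X + Y \<in> K"
| Kscale: "0 \<le> c \<Longrightarrow> X \<in> K \<Longrightarrow> c *\<^sub>R X \<in> K"
| Kgen: "Y ** Q = Q ** Y \<Longrightarrow> P = Ipl \<or> P = Imn \<Longrightarrow> transpose Y ** P ** Y \<in> K"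

lemma K_comm: "X \<in> K \<Longrightarrow> X ** Q = Q ** X"
proof (induction rule: K.induct)
  case K0 then show ?case by simp
next
  case (Kadd X Y) then show ?case by (simp add: comm_add)
next
  case (Kscale c X) then show ?case by (simp add: comm_scale)
next
  case (Kgen Y P)
  have "P ** Q = Q ** P" using Kgen(2) Ipl_comm Imn_comm by auto
  then show ?case using Kgen(1) comm_T comm_mul by blast
qed

lemma trace_assoc_gen: "trace (transpose (Y::real^'e^'e) ** P ** Y ** Z) = trace (P ** (Y ** Z ** transpose Y))"
proof -
  have "trace (transpose Y ** (P ** Y ** Z)) = trace ((P ** Y ** Z) ** transpose Y)"
    by (rule trace_mul_sym)
  then show ?thesis by (simp add: matrix_mul_assoc)
qed

lemma K_tr: "X \<in> K \<Longrightarrow> psd Z \<Longrightarrow> 0 \<le> trace (X ** Z)"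
proof (induction arbitrary: Z rule: K.induct)
  case K0 then show ?case by (simp add: trace_0[unfolded mat_0])
next
  case (Kadd X Y) then show ?case by (simp add: mm_add_r trace_add)
next
  case (Kscale c X) then show ?case by (simp add: mm_scale_l trace_scale)
next
  case (Kgen Y P)
  then show ?case using key[OF psd_conj[OF Kgen(3)], of P Y] trace_assoc_gen[of Y P Z] by (simp add: Ipl_def Imn_def)
qed

lemma K_T: "X \<in> K \<Longrightarrow> transpose X = X"
proof (induction rule: K.induct)
  case K0 then show ?case by (simp add: transpose_def vec_eq_iff)
next
  case (Kadd X Y) then show ?case by (simp add: transpose_add)
next
  case (Kscale c X) then show ?case by (simp add: transpose_scalar)
next
  case (Kgen Y P)
  have "transpose P = P" using Kgen(2) Ipl_T Imn_T by auto
  then show ?case by (simp add: matrix_transpose_mul matrix_mul_assoc)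
qed

end


context qset begin

lemma Ipl_Imn_sum: "Ipl + Imn = 2 *\<^sub>R mat 1"
  by (simp add: vec_eq_iff mat_def Ipl_def Imn_def)

lemma K_sq: assumes "Y ** Q = Q ** Y" shows "transpose Y ** Y \<in> K"
proof -
  have "transpose Y ** Y = (1/2) *\<^sub>R (transpose Y ** Ipl ** Y + transpose Y ** Imn ** Y)"
  proof -
    have "transpose Y ** Ipl ** Y + transpose Y ** Imn ** Y = transpose Y ** (Ipl + Imn) ** Y"
      by (simp add: matrix_add_ldistrib mm_add_r)
    also have "\<dots> = 2 *\<^sub>R (transpose Y ** Y)" by (simp add: Ipl_Imn_sum mm_scale_l mm_scale_r)
    finally show ?thesis by simp
  qed
  also have "\<dots> \<in> K" using assms by (intro Kscale Kadd Kgen) auto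
  finally show ?thesis .
qed

lemma Imn_Ipl: "Imn ** Ipl = Ipl ** Imn"
  by (rule Ipl_comm_gen[symmetric]) (rule Imn_comm)

lemma K_mulIp: "X \<in> K \<Longrightarrow> X ** Ipl \<in> K"
proof (induction rule: K.induct)
  case K0 then show ?case by (simp add: K.K0)
next
  case (Kadd X Y) then show ?case by (simp add: mm_add_r K.Kadd)
next
  case (Kscale c X) then show ?case by (simp add: mm_scale_l K.Kscale)
next
  case (Kgen Y P)
  have YI: "Y ** Ipl = Ipl ** Y" using Ipl_comm_gen[OF Kgen(1)] by simp
  have YJ: "Y ** Imn = Imn ** Y" using Imn_comm_gen[OF Kgen(1)] by simp
  have c1: "(Ipl ** Y) ** Q = Q ** (Ipl ** Y)" using Kgen(1) Ipl_comm comm_mul by blast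
  have c2: "(Imn ** Y) ** Q = Q ** (Imn ** Y)" using Kgen(1) Imn_comm comm_mul by blast
  have lhs: "transpose Y ** P ** Y ** Ipl = transpose Y ** (P ** Ipl) ** Y"
    by (simp add: matrix_mul_assoc[symmetric] YI)
  from Kgen(2) show ?case
  proof
    assume P: "P = Ipl"
    have "transpose Y ** P ** Y ** Ipl = (1/2) *\<^sub>R (transpose (Ipl ** Y) ** Ipl ** (Ipl ** Y)
         + transpose (Ipl ** Y) ** Imn ** (Ipl ** Y))"
    proof -
      have "transpose (Ipl ** Y) ** Ipl ** (Ipl ** Y) + transpose (Ipl ** Y) ** Imn ** (Ipl ** Y)
          = transpose Y ** (Ipl ** (Ipl + Imn) ** Ipl) ** Y"
        by (simp add: matrix_transpose_mul Ipl_T matrix_mul_assoc matrix_add_ldistrib mm_add_r)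
      also have "\<dots> = 2 *\<^sub>R (transpose Y ** (P ** Ipl) ** Y)"
        by (simp add: Ipl_Imn_sum mm_scale_l mm_scale_r P)
      finally show ?thesis using lhs by simp
    qed
    also have "\<dots> \<in> K" using c1 by (intro K.Kscale K.Kadd K.Kgen) auto
    finally show ?thesis .
  next
    assume P: "P = Imn"
    have "transpose Y ** P ** Y ** Ipl = (1/2) *\<^sub>R (transpose (Imn ** Y) ** Ipl ** (Imn ** Y)
         + transpose (Ipl ** Y) ** Imn ** (Ipl ** Y))"
    proof -
      have "transpose (Imn ** Y) ** Ipl ** (Imn ** Y) + transpose (Ipl ** Y) ** Imn ** (Ipl ** Y)
          = transpose Y ** (Imn ** Ipl ** Imn + Ipl ** Imn ** Ipl) ** Y"
        by (simp add: matrix_transpose_mul Ipl_T Imn_T matrix_mul_assoc matrix_add_ldistrib mm_add_r)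
      also have "Imn ** Ipl ** Imn + Ipl ** Imn ** Ipl = Imn ** Ipl ** (Imn + Ipl)"
        by (metis Imn_Ipl matrix_add_ldistrib matrix_mul_assoc)
      also have "Imn + Ipl = 2 *\<^sub>R mat 1" using Ipl_Imn_sum by (simp add: add.commute)
      finally show ?thesis using lhs by (simp add: mm_scale_l mm_scale_r P)
    qed
    also have "\<dots> \<in> K" using c1 c2 by (intro K.Kscale K.Kadd K.Kgen) auto
    finally show ?thesis .
  qed
qed

lemma Imn_K: "Imn \<in> K"
  using K.Kgen[of "mat 1" Imn] by simp


definition L0r :: "real^'e^'e \<Rightarrow> real^'e^'e" where
  "L0r C = ((real CARD('e) - 2)/real CARD('e)) *\<^sub>R C + (1/real CARD('e)) *\<^sub>R (C ** Q + Q ** C)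
     - (2 * trace C / real CARD('e)^2) *\<^sub>R Q + (2 * trace C / real CARD('e)^2) *\<^sub>R mat 1"

lemma nn_pos: "real CARD('e) > 8" using card8 by simp

lemma psd_I: "psd (mat 1 :: real^'e^'e)" by (simp add: psd_def)

lemma K_trace: "X \<in> K \<Longrightarrow> 0 \<le> trace X"
  using K_tr[of X "mat 1"] psd_I by simp

lemma L0r_K_form: assumes "X ** Q = Q ** X"
  shows "L0r X = ((real CARD('e) - 4)/real CARD('e)) *\<^sub>R X + (2/real CARD('e)) *\<^sub>R (X ** Ipl) + (2 * trace X / real CARD('e)^2) *\<^sub>R Imn"
proof -
  have n0: "real CARD('e) \<noteq> 0" using nn_pos by simp
  show ?thesis unfolding L0r_def assms Ipl_def Imn_def matrix_add_ldistrib
    using n0 by (simp add: vec_eq_iff field_simps)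
qed

lemma K_L0: "X \<in> K \<Longrightarrow> L0r X \<in> K"
  using nn_pos K_comm K_trace
  by (simp add: L0r_K_form K_comm) (intro K.Kadd K.Kscale K_mulIp Imn_K K_trace; simp)

end


definition outer :: "real^'n \<Rightarrow> real^'n^'n" where "outer v = (\<chi> i j. v$i * v$j)"

lemma psd_outer: "psd (outer v)"
proof -
  have "u \<bullet> (outer v *v u) = (u \<bullet> v)^2" for u
    unfolding inner_qf by (simp add: outer_def inner_vec_def power2_eq_square sum_product mult_ac)
  then show ?thesis by (simp add: psd_def)
qed

lemma scaleR_mv: "(c *\<^sub>R (A::real^'n^'m)) *v v = c *\<^sub>R (A *v v)"
  by (simp add: matrix_vector_mult_def vec_eq_iff sum_distrib_left mult_ac)

lemma trace_outer: "trace (A ** outer v) = v \<bullet> (A *v v)"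
  by (simp add: trace_def matrix_matrix_mult_def outer_def inner_qf mult_ac sum_distrib_left)

context qset begin

lemma quadQ: "v \<bullet> (Q *v v) \<le> v \<bullet> v"
proof -
  have "0 \<le> trace (Imn ** outer v)" by (rule key[OF psd_outer]) (simp add: Imn_def)
  also have "\<dots> = v \<bullet> v - v \<bullet> (Q *v v)"
    by (simp add: trace_outer Imn_def matrix_vector_mult_diff_rdistrib inner_diff_right)
  finally show ?thesis by simp
qed

end

locale qlam = qset Q for Q :: "real^'e::finite^'e" +
  fixes lam :: real
  assumes lam_pos: "lam > 0"
begin

definition "M = (lam + 2) *\<^sub>R mat 1 - 2 *\<^sub>R Q"

lemma M_quad: "lam * (v \<bullet> v) \<le> v \<bullet> (M *v v)"
proof -
  have "v \<bullet> (M *v v) = (lam + 2) * (v \<bullet> v) - 2 * (v \<bullet> (Q *v v))"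
    by (simp add: M_def matrix_vector_mult_diff_rdistrib inner_diff_right algebra_simps
        scaleR_mv)
  then show ?thesis using quadQ[of v] by (simp add: algebra_simps)
qed

lemma M_inj: "M *v v = 0 \<Longrightarrow> v = 0"
proof -
  assume "M *v v = 0"
  then have "lam * (v \<bullet> v) \<le> 0" using M_quad[of v] by simp
  then have "v \<bullet> v \<le> 0" using lam_pos by (simp add: mult_le_0_iff)
  then show "v = 0" by (metis inner_eq_zero_iff inner_ge_zero order_antisym)
qed

definition "R = (SOME R. R ** M = mat 1)"

lemma RM: "R ** M = mat 1"
proof -
  have "\<exists>B. B ** M = mat 1" using matrix_left_invertible_ker(1)[of M] M_inj by blast
  then show ?thesis unfolding R_def by (rule someI_ex)
qed

lemma MR: "M ** R = mat 1" using RM matrix_left_right_inverse by blast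

lemma M_T: "transpose M = M"
  by (simp add: M_def transpose_diff transpose_scalar QT)

lemma MQ: "M ** Q = Q ** M"
  by (simp add: M_def mm_diff_l mm_diff_r mm_scale_l mm_scale_r)

lemma R_T: "transpose R = R"
proof -
  have "transpose R ** M = mat 1"
    by (metis M_T MR matrix_transpose_mul transpose_mat)
  have "transpose R = transpose R ** (M ** R)" by (simp add: MR)
  also have "\<dots> = (transpose R ** M) ** R" by (simp add: matrix_mul_assoc)
  also have "\<dots> = R" using \<open>transpose R ** M = mat 1\<close> by simp
  finally show ?thesis .
qed

lemma RQ: "R ** Q = Q ** R"
proof -
  have "R ** Q = R ** Q ** (M ** R)" by (simp add: MR)
  also have "\<dots> = R ** (M ** Q) ** R" by (simp add: matrix_mul_assoc MQ)
  also have "\<dots> = Q ** R" by (simp add: matrix_mul_assoc RM)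
  finally show ?thesis .
qed

lemma R_quad: "v \<bullet> (R *v v) = (R *v v) \<bullet> (M *v (R *v v))"
proof -
  have "v = M *v (R *v v)" by (simp add: matrix_vector_mul_assoc MR)
  then have "v \<bullet> (R *v v) = (M *v (R *v v)) \<bullet> (R *v v)" by simp
  also have "\<dots> = (R *v v) \<bullet> (M *v (R *v v))"
    by (metis M_T dot_lmul_matrix inner_commute transpose_matrix_vector)
  finally show ?thesis .
qed

lemma psd_R: "psd R"
  unfolding psd_def
proof
  fix v
  have "0 \<le> lam * ((R *v v) \<bullet> (R *v v))" using lam_pos by simp
  also have "\<dots> \<le> v \<bullet> (R *v v)" using M_quad R_quad by simp
  finally show "0 \<le> v \<bullet> (R *v v)" .
qed

lemma trR_pos: "trace R > 0"
proof -
  have "trace R = (\<Sum>x\<in>UNIV. axis x 1 \<bullet> (R *v axis x 1))"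
    by (simp add: trace_def axis_qf)
  also have "\<dots> > 0"
  proof (rule sum_pos)
    fix x :: 'e
    let ?w = "R *v axis x 1"
    have "?w \<noteq> 0"
    proof
      assume "?w = 0"
      then have "M *v ?w = 0" by simp
      then show False by (simp add: matrix_vector_mul_assoc MR axis_eq_0_iff)
    qed
    then have "0 < lam * (?w \<bullet> ?w)" using lam_pos by simp
    also have "\<dots> \<le> axis x 1 \<bullet> (R *v axis x 1)" using M_quad R_quad by simp
    finally show "0 < axis x 1 \<bullet> (R *v axis x 1)" .
  qed auto
  finally show ?thesis .
qed

end


context qlam begin

lemma M_expand: "A ** M = (lam + 2) *\<^sub>R A - 2 *\<^sub>R (A ** Q)"
  by (simp add: M_def mm_diff_l mm_scale_r)

lemma trace_L0R:
  "trace (L0r X ** R) = ((real CARD('e) + lam) / real CARD('e)) * trace (X ** R)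
     - (lam * trace R / (real CARD('e))^2) * trace X"
proof -
  let ?n = "real CARD('e)"
  have n0: "?n > 0" using nn_pos by simp
  have h1: "(lam + 2) * trace (X ** R) - 2 * trace (X ** Q ** R) = trace X"
  proof -
    have "trace X = trace (X ** M ** R)" by (simp add: matrix_mul_assoc[symmetric] MR)
    also have "\<dots> = (lam + 2) * trace (X ** R) - 2 * trace (X ** Q ** R)"
      by (simp add: M_expand mm_diff_r mm_scale_l trace_sub trace_scale)
    finally show ?thesis by simp
  qed
  have h2: "trace (Q ** X ** R) = trace (X ** Q ** R)"
  proof -
    have "trace (Q ** (X ** R)) = trace ((X ** R) ** Q)" by (rule trace_mul_sym)
    also have "\<dots> = trace (X ** Q ** R)" by (simp add: matrix_mul_assoc[symmetric] RQ)
    finally show ?thesis by (simp add: matrix_mul_assoc)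
  qed
  have h3: "(lam + 2) * trace R - 2 * trace (Q ** R) = ?n"
  proof -
    have "?n = trace (M ** R)" by (simp add: MR trace_I)
    also have "\<dots> = (lam + 2) * trace R - 2 * trace (Q ** R)"
      by (simp add: M_def mm_diff_r mm_scale_l trace_sub trace_scale)
    finally show ?thesis by simp
  qed
  have e: "trace (L0r X ** R) = ((?n - 2)/?n) * trace (X ** R)
      + (1/?n) * (trace (X ** Q ** R) + trace (Q ** X ** R))
      - (2 * trace X / ?n^2) * trace (Q ** R) + (2 * trace X / ?n^2) * trace R"
    by (simp add: L0r_def mm_add_r mm_diff_r mm_scale_l trace_add trace_sub trace_scale)
  show ?thesis unfolding e h2
    using h1 h3 n0 by (simp add: field_simps power2_eq_square) algebra
qed

end


definition Sr :: "('e::finite \<Rightarrow> bool) \<Rightarrow> real^'e^'e \<Rightarrow> real" where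
  "Sr \<xi> C = (\<Sum>x\<in>UNIV. \<Sum>y\<in>UNIV. of_bool (\<xi> x) * C$x$y * of_bool (\<xi> y))"

definition xv :: "('e::finite \<Rightarrow> bool) \<Rightarrow> real^'e" where "xv \<xi> = (\<chi> i. of_bool (\<xi> i))"

lemma Sr_trace: "Sr \<xi> C = trace (C ** outer (xv \<xi>))"
  by (simp add: Sr_def trace_outer inner_qf xv_def)

lemma psd_comp: "psd (real CARD('e) *\<^sub>R mat 1 - outer (xv (\<xi>::'e::finite \<Rightarrow> bool)))"
  unfolding psd_def
proof
  fix u :: "real^'e"
  have o: "outer (xv \<xi>) *v u = (xv \<xi> \<bullet> u) *\<^sub>R xv \<xi>"
    by (simp add: outer_def matrix_vector_mult_def vec_eq_iff inner_vec_def sum_distrib_left mult_ac)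
  have "xv \<xi> \<bullet> xv \<xi> \<le> real CARD('e)"
  proof -
    have "xv \<xi> \<bullet> xv \<xi> = (\<Sum>i\<in>UNIV. of_bool (\<xi> i) * of_bool (\<xi> i))"
      by (simp add: inner_vec_def xv_def)
    also have "\<dots> \<le> (\<Sum>i\<in>(UNIV::'e set). 1)" by (intro sum_mono) auto
    finally show ?thesis by simp
  qed
  then have "(u \<bullet> xv \<xi>)^2 \<le> real CARD('e) * (u \<bullet> u)"
  proof -
    assume a: "xv \<xi> \<bullet> xv \<xi> \<le> real CARD('e)"
    have "(u \<bullet> xv \<xi>)^2 \<le> (u \<bullet> u) * (xv \<xi> \<bullet> xv \<xi>)" by (rule Cauchy_Schwarz_ineq)
    also have "\<dots> \<le> (u \<bullet> u) * real CARD('e)" by (rule mult_left_mono[OF a]) simp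
    finally show ?thesis by (simp add: mult.commute)
  qed
  moreover have "u \<bullet> ((real CARD('e) *\<^sub>R mat 1 - outer (xv \<xi>)) *v u)
      = real CARD('e) * (u \<bullet> u) - (u \<bullet> xv \<xi>)^2"
    by (simp add: matrix_vector_mult_diff_rdistrib scaleR_mv o inner_diff_right power2_eq_square inner_commute)
  ultimately show "0 \<le> u \<bullet> ((real CARD('e) *\<^sub>R mat 1 - outer (xv \<xi>)) *v u)" by simp
qed

context qset begin

lemma Sr_nonneg: "X \<in> K \<Longrightarrow> 0 \<le> Sr \<xi> X"
  by (simp add: Sr_trace K_tr psd_outer)

lemma Sr_le: "X \<in> K \<Longrightarrow> Sr \<xi> X \<le> real CARD('e) * trace X"
proof -
  assume "X \<in> K"
  then have "0 \<le> trace (X ** (real CARD('e) *\<^sub>R mat 1 - outer (xv \<xi>)))"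
    using K_tr psd_comp by blast
  then show ?thesis by (simp add: Sr_trace mm_diff_l mm_scale_r trace_sub trace_scale)
qed

end

context qlam begin

definition "tt = real CARD('e) / (real CARD('e) + lam)"

lemma tt_pos: "0 < tt" "tt < 1"
  using nn_pos lam_pos by (auto simp: tt_def)

lemma summable_tr:
  assumes X0: "X0 \<in> K"
  shows "summable (\<lambda>k. tt^k * trace ((L0r ^^ k) X0))"
proof -
  let ?n = "real CARD('e)"
  define X where "X k = (L0r ^^ k) X0" for k
  have XK: "X k \<in> K" for k by (induction k) (auto simp: X_def X0 K_L0)
  define \<kappa> where "\<kappa> = lam * trace R / ?n^2"
  have kpos: "\<kappa> > 0" using lam_pos trR_pos nn_pos by (simp add: \<kappa>_def)
  define u where "u k = tt^k * trace (X k ** R)" for k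
  have u0: "0 \<le> u k" for k using K_tr[OF XK psd_R] tt_pos by (simp add: u_def)
  have ustep: "u (Suc k) = u k - tt^(Suc k) * \<kappa> * trace (X k)" for k
  proof -
    have "X (Suc k) = L0r (X k)" by (simp add: X_def)
    then have "u (Suc k) = tt^(Suc k) * (((?n + lam)/?n) * trace (X k ** R) - \<kappa> * trace (X k))"
      by (simp add: u_def trace_L0R \<kappa>_def)
    also have "\<dots> = tt^k * (tt * ((?n + lam)/?n)) * trace (X k ** R) - tt^(Suc k) * \<kappa> * trace (X k)"
      by (simp add: algebra_simps)
    also have "tt * ((?n + lam)/?n) = 1"
      using nn_pos lam_pos by (simp add: tt_def)
    finally show ?thesis by (simp add: u_def)
  qed
  have psum: "(\<Sum>k<m. tt^(Suc k) * \<kappa> * trace (X k)) = u 0 - u m" for m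
    by (induction m) (auto simp: ustep)
  show ?thesis
  proof (rule summableI_nonneg_bounded)
    fix k show "0 \<le> tt^k * trace ((L0r ^^ k) X0)"
      using K_trace[OF XK] tt_pos by (simp add: X_def)
  next
    fix m
    have "(\<Sum>k<m. tt^k * trace ((L0r ^^ k) X0)) = (1/(tt*\<kappa>)) * (\<Sum>k<m. tt^(Suc k) * \<kappa> * trace (X k))"
      using tt_pos kpos by (simp add: sum_distrib_left X_def field_simps)
    also have "\<dots> \<le> (1/(tt*\<kappa>)) * u 0"
      unfolding psum using u0[of m] tt_pos kpos by (intro mult_left_mono) auto
    finally show "(\<Sum>k<m. tt^k * trace ((L0r ^^ k) X0)) \<le> (1/(tt*\<kappa>)) * u 0" .
  qed
qed

end


context qset begin

definition "Jr = (\<chi> i j. 1 / real CARD('e) :: real^'e^'e)"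

lemma L0r_add: "L0r (A + B) = L0r A + L0r B"
  by (simp add: L0r_def trace_add matrix_add_ldistrib mm_add_r vec_eq_iff algebra_simps add_divide_distrib)

lemma L0r_scale: "L0r (c *\<^sub>R A) = c *\<^sub>R L0r A"
  by (simp add: L0r_def trace_scale mm_scale_l mm_scale_r vec_eq_iff algebra_simps)

lemma L0r_pow_add: "(L0r ^^ k) (A + B) = (L0r ^^ k) A + (L0r ^^ k) B"
  by (induction k) (simp_all add: L0r_add)

lemma L0r_pow_scale: "(L0r ^^ k) (c *\<^sub>R A) = c *\<^sub>R (L0r ^^ k) A"
  by (induction k) (simp_all add: L0r_scale)

lemma JQ: "Jr ** Q = Jr"
  by (simp add: Jr_def matrix_matrix_mult_def vec_eq_iff sum_divide_distrib[symmetric] Qcol)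
lemma QJ: "Q ** Jr = Jr"
  by (simp add: Jr_def matrix_matrix_mult_def vec_eq_iff sum_divide_distrib[symmetric] Qrow)
lemma JJ: "Jr ** Jr = Jr"
  by (simp add: Jr_def matrix_matrix_mult_def vec_eq_iff)
lemma JT: "transpose Jr = Jr"
  by (simp add: Jr_def transpose_def vec_eq_iff)
lemma trJ: "trace Jr = 1"
  by (simp add: Jr_def trace_def)

lemma J_K: "Jr \<in> K"
proof -
  have "transpose Jr ** Ipl = 2 *\<^sub>R Jr"
    by (simp add: JT Ipl_def matrix_add_ldistrib JQ scaleR_2)
  then have "transpose Jr ** Ipl ** Jr = 2 *\<^sub>R Jr"
    by (simp add: mm_scale_l JJ)
  then have "Jr = (1/2) *\<^sub>R (transpose Jr ** Ipl ** Jr)" by simp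
  also have "\<dots> \<in> K" by (intro K.Kscale K.Kgen) (auto simp: JQ QJ)
  finally show ?thesis .
qed

lemma L0r_J: "L0r Jr = Jr + (2 / real CARD('e)^2) *\<^sub>R Imn"
proof -
  have "Jr ** Ipl = 2 *\<^sub>R Jr" by (simp add: Ipl_def matrix_add_ldistrib JQ scaleR_2)
  then show ?thesis using nn_pos
    by (simp add: L0r_K_form JQ QJ trJ vec_eq_iff field_simps)
qed

lemma L0r_I: "L0r (mat 1) = mat 1"
proof -
  have "trace (mat 1 :: real^'e^'e) = real CARD('e)" by (simp add: trace_I)
  then show ?thesis using nn_pos
    by (simp add: L0r_K_form Ipl_def Imn_def vec_eq_iff field_simps) (simp add: algebra_simps eval_nat_numeral)
qed

end

context qlam begin

lemma QR_eq: "Q ** R = (1/2) *\<^sub>R ((lam + 2) *\<^sub>R R - mat 1)"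
proof -
  have "M ** R = mat 1" by (rule MR)
  then have "(lam + 2) *\<^sub>R R - 2 *\<^sub>R (Q ** R) = mat 1"
    by (simp add: M_def mm_diff_r mm_scale_l)
  then have h: "((lam + 2) *\<^sub>R R - 2 *\<^sub>R (Q ** R))$i$j = mat 1 $i$j" for i j by simp
  show ?thesis
    unfolding vec_eq_iff
  proof (intro allI)
    fix i j
    show "(Q ** R) $ i $ j = ((1/2) *\<^sub>R ((lam + 2) *\<^sub>R R - mat 1)) $ i $ j"
      using h[of i j] by simp
  qed
qed

end


context qlam begin

lemma L0r_R: "L0r R = ((real CARD('e) + lam) / real CARD('e)) *\<^sub>R R - (1 / real CARD('e)) *\<^sub>R mat 1
   + (2 * trace R / real CARD('e)^2) *\<^sub>R Imn"
proof -
  have e: "R ** Ipl = R + (1/2) *\<^sub>R ((lam + 2) *\<^sub>R R - mat 1)"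
    by (simp add: Ipl_def matrix_add_ldistrib RQ QR_eq)
  show ?thesis using nn_pos
    by (simp add: L0r_K_form[OF RQ] e vec_eq_iff field_simps)
qed

lemma D_eq: "Imn ** R = (1/2) *\<^sub>R (mat 1 - lam *\<^sub>R R)"
proof -
  have "Imn ** R = R - Q ** R" by (simp add: Imn_def mm_diff_r)
  then show ?thesis by (simp add: QR_eq vec_eq_iff field_simps)
qed

definition "alpha = (real CARD('e) + lam) / lam"
definition "cc = 2 * (real CARD('e) + lam) / (lam^2 * trace R)"
definition "Fm = alpha *\<^sub>R Jr + cc *\<^sub>R (Imn ** R)"

lemma cc_rel: "cc * lam * trace R = 2 * alpha"
  using lam_pos trR_pos by (simp add: cc_def alpha_def field_simps power2_eq_square)

lemma L0r_D: "L0r (Imn ** R) = (1/2) *\<^sub>R (mat 1 - lam *\<^sub>R L0r R)"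
proof -
  have "L0r (mat 1 - lam *\<^sub>R R) = mat 1 - lam *\<^sub>R L0r R"
    using L0r_add[of "mat 1" "(-lam) *\<^sub>R R"] L0r_scale[of "-lam" R] L0r_I by simp
  then show ?thesis unfolding D_eq by (simp add: L0r_scale)
qed

lemma lincomb:
  fixes al t c n T l :: real
  assumes e1: "al = 1 + t * al" and e2: "t * ((n + l) / n) = 1"
    and e3: "al * (2 / n^2) - c/2 * l * (2 * T / n^2) = 0" and n0: "n \<noteq> 0"
  shows "al * j + c * (1/2 * (d - l * r)) = j + t * (al * (j + 2 / n^2 * m)
     + c * (1/2 * (d - l * ((n + l) / n * r - 1 / n * d + 2 * T / n^2 * m))))"
proof -
  have "j + t * (al * (j + 2 / n^2 * m)
     + c * (1/2 * (d - l * ((n + l) / n * r - 1 / n * d + 2 * T / n^2 * m))))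
     = j + (t * al) * j + t * m * (al * (2 / n^2) - c/2 * l * (2 * T / n^2))
       + c/2 * d * (t * ((n + l) / n)) - c/2 * l * r * (t * ((n + l) / n))"
    using n0 by (simp add: field_simps)
  also have "\<dots> = al * j + c * (1/2 * (d - l * r))"
  proof -
    from e1 have "al * j = (1 + t * al) * j" by simp
    then show ?thesis unfolding e2 e3 by (simp add: field_simps)
  qed
  finally show ?thesis by simp
qed

lemma F_fix: "Fm = Jr + tt *\<^sub>R L0r Fm"
proof -
  have L: "L0r Fm = alpha *\<^sub>R L0r Jr + cc *\<^sub>R L0r (Imn ** R)"
    by (simp add: Fm_def L0r_add L0r_scale)
  have r: "cc * lam * trace R = 2 * alpha" by (rule cc_rel)
  have n0: "real CARD('e) > 0" using nn_pos by simp
  have L2: "L0r Fm = alpha *\<^sub>R (Jr + (2 / real CARD('e)^2) *\<^sub>R Imn) + cc *\<^sub>R ((1/2) *\<^sub>R (mat 1 - lam *\<^sub>R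
     (((real CARD('e) + lam) / real CARD('e)) *\<^sub>R R - (1 / real CARD('e)) *\<^sub>R mat 1
   + (2 * trace R / real CARD('e)^2) *\<^sub>R Imn)))"
    unfolding L L0r_D L0r_R L0r_J ..
  have nl: "real CARD('e) + lam \<noteq> 0" using lam_pos n0 by simp
  have omt: "1 - tt = lam / (real CARD('e) + lam)" using nl by (simp add: tt_def field_simps)
  have "alpha * (1 - tt) = 1" unfolding omt alpha_def using nl lam_pos by simp
  then have e1: "alpha = 1 + tt * alpha" by (simp add: algebra_simps)
  have e2: "tt * ((real CARD('e) + lam) / real CARD('e)) = 1"
  proof -
    have "real CARD('e) + lam \<noteq> 0" using lam_pos n0 by simp
    then show ?thesis using n0 by (simp add: tt_def)
  qed
  have e3: "alpha * (2 / real CARD('e)^2) - cc/2 * lam * (2 * trace R / real CARD('e)^2) = 0"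
    using r by (simp add: field_simps)
  show ?thesis
    unfolding L2 unfolding Fm_def D_eq vec_eq_iff
  proof (intro allI)
    fix i k
    show "(alpha *\<^sub>R Jr + cc *\<^sub>R ((1 / 2) *\<^sub>R (mat 1 - lam *\<^sub>R R))) $ i $ k =
          (Jr + tt *\<^sub>R (alpha *\<^sub>R (Jr + (2 / real CARD('e)^2) *\<^sub>R Imn) + cc *\<^sub>R ((1/2) *\<^sub>R (mat 1 - lam *\<^sub>R
     (((real CARD('e) + lam) / real CARD('e)) *\<^sub>R R - (1 / real CARD('e)) *\<^sub>R mat 1
   + (2 * trace R / real CARD('e)^2) *\<^sub>R Imn))))) $ i $ k"
      using lincomb[OF e1 e2 e3, of "Jr$i$k" "mat 1 $i$k" "R$i$k" "Imn$i$k"] by simp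
  qed
qed

lemma D_K: "Imn ** R \<in> K"
proof -
  have Mform: "M = lam *\<^sub>R mat 1 + 2 *\<^sub>R Imn"
    by (simp add: M_def Imn_def vec_eq_iff algebra_simps)
  have IM: "Imn ** M = M ** Imn" using Imn_comm_gen[OF MQ] .
  have "Imn ** R = R ** M ** Imn ** R" by (simp add: RM)
  also have "\<dots> = R ** Imn ** M ** R" by (simp add: matrix_mul_assoc[symmetric] IM)
  also have "\<dots> = lam *\<^sub>R (transpose R ** Imn ** R) + 2 *\<^sub>R (transpose (Imn ** R) ** (Imn ** R))"
    by (simp add: Mform matrix_add_ldistrib mm_add_r mm_scale_l mm_scale_r matrix_transpose_mul
        R_T Imn_T matrix_mul_assoc)
  also have "\<dots> \<in> K"
  proof (intro K.Kadd K.Kscale K.Kgen K_sq)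
    show "R ** Q = Q ** R" by (rule RQ)
    show "Imn ** R ** Q = Q ** (Imn ** R)" using comm_mul[OF Imn_comm RQ] .
  qed (use lam_pos in auto)
  finally show ?thesis .
qed

lemma F_K: "Fm \<in> K"
  unfolding Fm_def using lam_pos trR_pos
  by (intro K.Kadd K.Kscale J_K D_K) (auto simp: alpha_def cc_def)

end


lemma Sr_add: "Sr \<xi> (A + B) = Sr \<xi> A + Sr \<xi> B"
  by (simp add: Sr_def algebra_simps sum.distrib)
lemma Sr_scale: "Sr \<xi> (c *\<^sub>R A) = c * Sr \<xi> A"
  unfolding Sr_def sum_distrib_left by (intro sum.cong refl) (simp add: mult_ac)
lemma Sr_zero: "Sr \<xi> 0 = 0" by (simp add: Sr_def)
lemma Sr_sum: "Sr \<xi> (\<Sum>i<(k::nat). f i) = (\<Sum>i<k. Sr \<xi> (f i))"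
  by (induction k) (simp_all add: Sr_add Sr_zero)

context qlam begin

lemma psum_F: "Fm = (\<Sum>i<k. tt^i *\<^sub>R (L0r^^i) Jr) + tt^k *\<^sub>R (L0r^^k) Fm"
proof (induction k)
  case 0 then show ?case by simp
next
  case (Suc k)
  have e: "(L0r^^k) Fm = (L0r^^k) Jr + tt *\<^sub>R (L0r^^(Suc k)) Fm"
    by (subst F_fix) (simp add: L0r_pow_add L0r_pow_scale funpow_Suc_right del: funpow.simps)
  have "Fm = (\<Sum>i<k. tt^i *\<^sub>R (L0r^^i) Jr) + tt^k *\<^sub>R ((L0r^^k) Jr + tt *\<^sub>R (L0r^^(Suc k)) Fm)"
    using Suc by (simp only: e[symmetric])
  also have "\<dots> = (\<Sum>i<Suc k. tt^i *\<^sub>R (L0r^^i) Jr) + tt^(Suc k) *\<^sub>R (L0r^^(Suc k)) Fm"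
    by (simp only: sum.lessThan_Suc scaleR_add_right scaleR_scaleR power_Suc add.assoc mult.commute)
  finally show ?case .
qed

definition "co = lam / (real CARD('e) + lam)"

definition "ar \<xi> k = co * tt^k * (1 / real CARD('e)) * Sr \<xi> ((L0r^^k) Jr)"

lemma LK: "X \<in> K \<Longrightarrow> (L0r^^k) X \<in> K"
  by (induction k) (auto simp: K_L0)

lemma co_pos: "0 < co" using lam_pos nn_pos by (simp add: co_def)

lemma ar_abs_summable: "summable (\<lambda>k. \<bar>ar \<xi> k\<bar>)"
proof (rule summable_comparison_test)
  show "summable (\<lambda>k. co * (tt^k * trace ((L0r ^^ k) Jr)))"
    by (rule summable_mult) (rule summable_tr[OF J_K])
  show "\<exists>N. \<forall>k\<ge>N. norm \<bar>ar \<xi> k\<bar> \<le> co * (tt^k * trace ((L0r ^^ k) Jr))"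
  proof (intro exI allI impI)
    fix k :: nat
    have s0: "0 \<le> Sr \<xi> ((L0r^^k) Jr)" by (rule Sr_nonneg[OF LK[OF J_K]])
    have s1: "Sr \<xi> ((L0r^^k) Jr) \<le> real CARD('e) * trace ((L0r^^k) Jr)" by (rule Sr_le[OF LK[OF J_K]])
    have n0: "real CARD('e) > 0" using nn_pos by simp
    have t0: "0 \<le> tt^k" using tt_pos by simp
    have "\<bar>ar \<xi> k\<bar> = co * tt^k * (Sr \<xi> ((L0r^^k) Jr) / real CARD('e))"
      using co_pos t0 s0 n0 by (simp add: ar_def abs_mult)
    also have "\<dots> \<le> co * tt^k * trace ((L0r^^k) Jr)"
      using co_pos t0 s1 n0 by (intro mult_left_mono) (auto simp: field_simps)
    finally show "norm \<bar>ar \<xi> k\<bar> \<le> co * (tt^k * trace ((L0r ^^ k) Jr))" by (simp add: mult_ac)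
  qed
qed

lemma sums_S: "(\<lambda>k. tt^k * Sr \<xi> ((L0r^^k) Jr)) sums Sr \<xi> Fm"
proof -
  have ps: "(\<Sum>k<m. tt^k * Sr \<xi> ((L0r^^k) Jr)) = Sr \<xi> Fm - tt^m * Sr \<xi> ((L0r^^m) Fm)" for m
    using arg_cong[OF psum_F[of m], of "Sr \<xi>"] by (simp add: Sr_add Sr_scale Sr_sum)
  have lim0: "(\<lambda>m. tt^m * Sr \<xi> ((L0r^^m) Fm)) \<longlonglongrightarrow> 0"
  proof (rule tendsto_sandwich[of "\<lambda>_. 0" _ _ "\<lambda>m. real CARD('e) * (tt^m * trace ((L0r^^m) Fm))"])
    show "\<forall>\<^sub>F m in sequentially. 0 \<le> tt^m * Sr \<xi> ((L0r^^m) Fm)"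
      using Sr_nonneg[OF LK[OF F_K]] tt_pos by simp
    show "\<forall>\<^sub>F m in sequentially. tt^m * Sr \<xi> ((L0r^^m) Fm) \<le> real CARD('e) * (tt^m * trace ((L0r^^m) Fm))"
      using Sr_le[OF LK[OF F_K]] tt_pos
      by (simp add: mult.left_commute[of "tt^_"] mult_left_mono)
    have "(\<lambda>m. tt^m * trace ((L0r^^m) Fm)) \<longlonglongrightarrow> 0"
      by (rule summable_LIMSEQ_zero[OF summable_tr[OF F_K]])
    then show "(\<lambda>m. real CARD('e) * (tt^m * trace ((L0r^^m) Fm))) \<longlonglongrightarrow> 0"
      using tendsto_mult_right_zero by blast
  qed simp
  show ?thesis unfolding sums_def ps
    using tendsto_diff[OF tendsto_const lim0, of "Sr \<xi> Fm"] by simp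
qed

lemma ar_sums: "ar \<xi> sums (co * (1 / real CARD('e)) * Sr \<xi> Fm)"
proof -
  have "(\<lambda>k. (co * (1 / real CARD('e))) * (tt^k * Sr \<xi> ((L0r^^k) Jr))) sums ((co * (1 / real CARD('e))) * Sr \<xi> Fm)"
    by (rule sums_mult[OF sums_S])
  moreover have "(\<lambda>k. (co * (1 / real CARD('e))) * (tt^k * Sr \<xi> ((L0r^^k) Jr))) = ar \<xi>"
    by (simp add: ar_def fun_eq_iff mult_ac)
  ultimately show ?thesis by simp
qed

lemma Sr_J: "(1 / real CARD('e)) * Sr \<xi> Jr = (p1 \<xi>)^2"
proof -
  have e1: "Sr \<xi> Jr = (\<Sum>x\<in>UNIV. \<Sum>y\<in>UNIV. (1 / real CARD('e)) * (of_bool (\<xi> x) * of_bool (\<xi> y)))"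
    unfolding Sr_def Jr_def vec_lambda_beta
    by (rule sum.cong[OF refl], rule sum.cong[OF refl], simp only: mult_ac)
  have e2: "(\<Sum>x\<in>UNIV. \<Sum>y\<in>UNIV. (1 / real CARD('e)) * (of_bool (\<xi> x) * of_bool (\<xi> y)))
     = (1 / real CARD('e)) * ((\<Sum>x\<in>UNIV. of_bool (\<xi> x)) * (\<Sum>y\<in>UNIV. of_bool (\<xi> y)))"
    by (simp only: sum_product) (simp only: sum_distrib_left)
  have "Sr \<xi> Jr = (1 / real CARD('e)) * ((\<Sum>x\<in>UNIV. of_bool (\<xi> x)) * (\<Sum>y\<in>UNIV. of_bool (\<xi> y)))"
    using e1 e2 by (rule trans)
  then show ?thesis unfolding p1_def by (simp add: power2_eq_square)
qed

lemma value_eq: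
  "co * (1 / real CARD('e)) * Sr \<xi> Fm = (p1 \<xi>)^2
     + (1 / real CARD('e)) * Sr \<xi> (mat (1 / (lam * trace R)) ** (mat 2 ** Imn ** R))"
proof -
  have a: "co * alpha = 1" using lam_pos nn_pos by (simp add: co_def alpha_def)
  have nl: "real CARD('e) + lam \<noteq> 0" using lam_pos nn_pos by simp
  have c: "co * cc = 2 / (lam * trace R)" using lam_pos nl trR_pos
    by (simp add: co_def cc_def power2_eq_square divide_simps)
  have m: "mat (1 / (lam * trace R)) ** (mat 2 ** Imn ** R) = (2 / (lam * trace R)) *\<^sub>R (Imn ** R)"
    by (simp add: mat_real[of "1 / (lam * trace R)"] mat_real[of 2] mm_scale_l mm_scale_r)
  have "Sr \<xi> Fm = alpha * Sr \<xi> Jr + cc * Sr \<xi> (Imn ** R)" by (simp add: Fm_def Sr_add Sr_scale)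
  then have "co * Sr \<xi> Fm = (co * alpha) * Sr \<xi> Jr + (co * cc) * Sr \<xi> (Imn ** R)"
    by (simp add: distrib_left)
  then have "co * Sr \<xi> Fm = Sr \<xi> Jr + (2 / (lam * trace R)) * Sr \<xi> (Imn ** R)"
    unfolding a c by simp
  then have h: "co * Sr \<xi> Fm = Sr \<xi> Jr + (2 / (lam * trace R)) * Sr \<xi> (Imn ** R)" .
  have "co * (1 / real CARD('e)) * Sr \<xi> Fm = (1 / real CARD('e)) * (co * Sr \<xi> Fm)"
    by (simp only: mult_ac)
  also have "\<dots> = (1 / real CARD('e)) * Sr \<xi> Jr
     + (1 / real CARD('e)) * ((2 / (lam * trace R)) * Sr \<xi> (Imn ** R))"
    by (simp only: h distrib_left)
  finally have "co * (1 / real CARD('e)) * Sr \<xi> Fm = (1 / real CARD('e)) * Sr \<xi> Jr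
     + (1 / real CARD('e)) * ((2 / (lam * trace R)) * Sr \<xi> (Imn ** R))" .
  then show ?thesis unfolding m Sr_scale Sr_J .
qed

end


lemma cmat_entry[simp]: "cmat_of A $ i $ j = complex_of_real (A$i$j)"
  by (simp add: cmat_of_def)

lemma cmat_mult: "cmat_of (A ** B) = cmat_of A ** cmat_of B"
  by (simp add: vec_eq_iff matrix_matrix_mult_def)
lemma cmat_add: "cmat_of (A + B) = cmat_of A + cmat_of B"
  by (simp add: vec_eq_iff)
lemma cmat_diff: "cmat_of (A - B) = cmat_of A - cmat_of B"
  by (simp add: vec_eq_iff)
lemma cmat_mat: "cmat_of (mat c) = mat (complex_of_real c)"
  by (simp add: vec_eq_iff mat_def)
lemma cmat_trace: "trace (cmat_of A) = complex_of_real (trace A)"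
  by (simp add: trace_def)

lemma mat_mm: "(mat c ** A) $ i $ j = c * A$i$j"
  by (simp add: matrix_matrix_mult_def mat_def if_distrib if_distribR sum.delta' cong: if_cong)

context qset begin

lemma L0_cmat: "L0 Q (cmat_of C) = cmat_of (L0r C)"
  unfolding L0_def Let_def L0r_def
  by (simp add: vec_eq_iff mat_mm cmat_mult[symmetric] cmat_trace) (simp add: mat_def)

lemma Jmat_cmat: "Jmat = cmat_of Jr"
  by (simp add: vec_eq_iff Jmat_def Jr_def)

lemma L0_pow_cmat: "(L0 Q ^^ k) Jmat = cmat_of ((L0r ^^ k) Jr)"
  by (induction k) (simp_all add: Jmat_cmat L0_cmat)

end

lemma S_cmat: "S_xi \<xi> (cmat_of X) = complex_of_real (Sr \<xi> X)"
  by (simp add: S_xi_def Sr_def)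

lemma inv_unique:
  fixes A B :: "'a::field^'n^'n"
  assumes "A ** B = mat 1" "B ** A = mat 1"
  shows "matrix_inv A = B"
proof -
  have ex: "\<exists>A'. A ** A' = mat 1 \<and> A' ** A = mat 1" using assms by blast
  then have "A ** matrix_inv A = mat 1 \<and> matrix_inv A ** A = mat 1"
    unfolding matrix_inv_def by (rule someI_ex)
  then have "matrix_inv A = matrix_inv A ** (A ** B)" by (simp add: assms)
  also have "\<dots> = B" using \<open>A ** matrix_inv A = mat 1 \<and> matrix_inv A ** A = mat 1\<close>
    by (simp add: matrix_mul_assoc)
  finally show ?thesis .
qed

theorem lemma4p1:
  fixes Q :: "real^'e::finite^'e" and lam :: real and \<xi> :: "'e \<Rightarrow> bool"
  assumes "CARD('e) > 8"
    and "stochastic Q" and "irreducible_mat Q" and "symmetric_mat Q" and "trace Q = 0"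
    and "lam > 0"
  shows "let N = of_nat CARD('e) :: complex;
             R = matrix_inv (mat (complex_of_real lam + 2) - mat 2 ** cmat_of Q);
             a = (\<lambda>n. complex_of_real (lam / (real CARD('e) + lam))
                      * complex_of_real ((real CARD('e) / (real CARD('e) + lam)) ^ n)
                      * (1 / N) * S_xi \<xi> ((L0 Q ^^ n) Jmat))
         in summable (\<lambda>n. norm (a n))
            \<and> a sums (complex_of_real ((p1 \<xi>)\<^sup>2)
                 + (1 / N) * S_xi \<xi> (mat (1 / (complex_of_real lam * trace R))
                      ** (mat 2 ** (mat 1 - cmat_of Q) ** R)))"
proof -
  interpret qlam Q lam
    using assms by unfold_locales auto
  have Mc: "mat (complex_of_real lam + 2) - mat 2 ** cmat_of Q = cmat_of M"
    by (simp add: M_def vec_eq_iff mat_mm) (simp add: mat_def)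
  have Rc: "matrix_inv (cmat_of M) = cmat_of R"
    by (rule inv_unique) (simp_all add: cmat_mult[symmetric] MR RM cmat_mat)
  have Nc: "1 / (of_nat CARD('e) :: complex) = complex_of_real (1 / real CARD('e))" by simp
  have an: "complex_of_real (lam / (real CARD('e) + lam))
                      * complex_of_real ((real CARD('e) / (real CARD('e) + lam)) ^ n)
                      * (1 / of_nat CARD('e)) * S_xi \<xi> ((L0 Q ^^ n) Jmat)
       = complex_of_real (ar \<xi> n)" for n
    by (simp add: ar_def co_def tt_def L0_pow_cmat S_cmat)
  have rhs: "complex_of_real ((p1 \<xi>)\<^sup>2)
                 + (1 / of_nat CARD('e)) * S_xi \<xi> (mat (1 / (complex_of_real lam * trace (cmat_of R)))
                      ** (mat 2 ** (mat 1 - cmat_of Q) ** cmat_of R))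
       = complex_of_real (co * (1 / real CARD('e)) * Sr \<xi> Fm)"
  proof -
    have "mat (1 / (complex_of_real lam * trace (cmat_of R))) ** (mat 2 ** (mat 1 - cmat_of Q) ** cmat_of R)
        = cmat_of (mat (1 / (lam * trace R)) ** (mat 2 ** Imn ** R))"
      by (simp add: cmat_mult cmat_diff cmat_mat cmat_trace Imn_def)
    then show ?thesis unfolding value_eq by (simp add: S_cmat)
  qed
  have s1: "summable (\<lambda>n. norm (complex_of_real (ar \<xi> n)))"
    using ar_abs_summable[of \<xi>] by simp
  have s2: "(\<lambda>n. complex_of_real (ar \<xi> n)) sums complex_of_real (co * (1 / real CARD('e)) * Sr \<xi> Fm)"
    unfolding sums_of_real_iff by (rule ar_sums)
  show ?thesis
    unfolding Let_def Mc Rc an rhs using s1 s2 by blast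
qed


end
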